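(* Let $P$ be a finite poset and $X:P\to\mathcal{P}_{<\infty}$ a diagram of finite posets with transition maps $f_{pq}=X(p\to q)$. Suppose $p$ is a down beat point of $P$ dominated by $q$ (i.e. $q$ is the maximum of $\{r\in P: r<p\}$), and that $f_{qp}^{-1}(U_x)$ is a contractible finite space for every $x\in X_p$. Then $\operatorname{\underline{hocolim}} X$ collapses to $\operatorname{\underline{hocolim}} X|_{P\smallsetminus\{p\}}$. In particular they are weak equivalent.
   Context: $P$ is viewed as a category with a unique arrow $p\to q$ iff $p\le q$; $\mathcal{P}_{<\infty}$ is the category of finite posets and order-preserving maps. $\operatorname{\underline{hocolim}} X$ is the poset on $\coprod_{p}X_p$ keeping the order within each $X_p$ and, for $x\in X_p$, $y\in X_q$, $p\le q$, setting $x\le y$ iff $f_{pq}(x)\le y$ in $X_q$; $X|_{P\smallsetminus\{p\}}$ is the restricted diagram. For $x$ in a finite poset $Y$: $U_x=\{y\le x\}$, $\hat U_x=U_x\smallsetminus\{x\}$, $\hat F_x=\{y>x\}$. $x$ is an up beat point if $\hat F_x$ has a minimum, a down beat point if $\hat U_x$ has a maximum. A finite poset is contractible (dismantlable) if it can be reduced to one point by removing beat points one at a time. $x$ is a down (resp. up) weak point if $\hat U_x$ (resp. $\hat F_x$) is contractible; removing a weak point is an elementary collapse, and $Y$ collapses to $Z$ if $Z$ is obtained from $Y$ by a sequence of elementary collapses. Two finite posets are weak equivalent if their order complexes are homotopy equivalent. *)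

theory Defs
  imports "HOL-Analysis.Analysis"
begin

definition finite_poset :: "'a set \<Rightarrow> ('a \<Rightarrow> 'a \<Rightarrow> bool) \<Rightarrow> bool" where
  "finite_poset S le \<longleftrightarrow> finite S \<and> (\<forall>x\<in>S. le x x)
     \<and> (\<forall>x\<in>S. \<forall>y\<in>S. le x y \<and> le y x \<longrightarrow> x = y)
     \<and> (\<forall>x\<in>S. \<forall>y\<in>S. \<forall>z\<in>S. le x y \<and> le y z \<longrightarrow> le x z)"

definition less_in :: "('a \<Rightarrow> 'a \<Rightarrow> bool) \<Rightarrow> 'a \<Rightarrow> 'a \<Rightarrow> bool" where
  "less_in le x y \<longleftrightarrow> le x y \<and> x \<noteq> y"

definition down_hat :: "'a set \<Rightarrow> ('a \<Rightarrow> 'a \<Rightarrow> bool) \<Rightarrow> 'a \<Rightarrow> 'a set" where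
  "down_hat Y le x = {y\<in>Y. less_in le y x}"

definition up_hat :: "'a set \<Rightarrow> ('a \<Rightarrow> 'a \<Rightarrow> bool) \<Rightarrow> 'a \<Rightarrow> 'a set" where
  "up_hat Y le x = {y\<in>Y. less_in le x y}"

definition is_max_of :: "'a set \<Rightarrow> ('a \<Rightarrow> 'a \<Rightarrow> bool) \<Rightarrow> 'a \<Rightarrow> bool" where
  "is_max_of A le m \<longleftrightarrow> m \<in> A \<and> (\<forall>a\<in>A. le a m)"

definition is_min_of :: "'a set \<Rightarrow> ('a \<Rightarrow> 'a \<Rightarrow> bool) \<Rightarrow> 'a \<Rightarrow> bool" where
  "is_min_of A le m \<longleftrightarrow> m \<in> A \<and> (\<forall>a\<in>A. le m a)"

definition up_beat_point :: "'a set \<Rightarrow> ('a \<Rightarrow> 'a \<Rightarrow> bool) \<Rightarrow> 'a \<Rightarrow> bool" where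
  "up_beat_point Y le x \<longleftrightarrow> x \<in> Y \<and> (\<exists>m. is_min_of (up_hat Y le x) le m)"

definition down_beat_point :: "'a set \<Rightarrow> ('a \<Rightarrow> 'a \<Rightarrow> bool) \<Rightarrow> 'a \<Rightarrow> bool" where
  "down_beat_point Y le x \<longleftrightarrow> x \<in> Y \<and> (\<exists>m. is_max_of (down_hat Y le x) le m)"

definition beat_point :: "'a set \<Rightarrow> ('a \<Rightarrow> 'a \<Rightarrow> bool) \<Rightarrow> 'a \<Rightarrow> bool" where
  "beat_point Y le x \<longleftrightarrow> up_beat_point Y le x \<or> down_beat_point Y le x"

inductive contractible_fs :: "('a \<Rightarrow> 'a \<Rightarrow> bool) \<Rightarrow> 'a set \<Rightarrow> bool" for le where
  single: "contractible_fs le {a}"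
| remove: "beat_point Y le x \<Longrightarrow> contractible_fs le (Y - {x}) \<Longrightarrow> contractible_fs le Y"

definition down_weak_point :: "'a set \<Rightarrow> ('a \<Rightarrow> 'a \<Rightarrow> bool) \<Rightarrow> 'a \<Rightarrow> bool" where
  "down_weak_point Y le x \<longleftrightarrow> x \<in> Y \<and> contractible_fs le (down_hat Y le x)"

definition up_weak_point :: "'a set \<Rightarrow> ('a \<Rightarrow> 'a \<Rightarrow> bool) \<Rightarrow> 'a \<Rightarrow> bool" where
  "up_weak_point Y le x \<longleftrightarrow> x \<in> Y \<and> contractible_fs le (up_hat Y le x)"

definition weak_point :: "'a set \<Rightarrow> ('a \<Rightarrow> 'a \<Rightarrow> bool) \<Rightarrow> 'a \<Rightarrow> bool" where
  "weak_point Y le x \<longleftrightarrow> down_weak_point Y le x \<or> up_weak_point Y le x"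

inductive collapses :: "('a \<Rightarrow> 'a \<Rightarrow> bool) \<Rightarrow> 'a set \<Rightarrow> 'a set \<Rightarrow> bool" for le where
  refl: "collapses le Y Y"
| step: "weak_point Y le x \<Longrightarrow> collapses le (Y - {x}) Z \<Longrightarrow> collapses le Y Z"

text \<open>Geometric realization of the order complex of a finite poset (S, le):
  points are convex combinations of vertices of S whose support is a chain,
  with the topology inherited from the product topology on 'a => real.\<close>
definition order_complex_space :: "'a set \<Rightarrow> ('a \<Rightarrow> 'a \<Rightarrow> bool) \<Rightarrow> ('a \<Rightarrow> real) topology" where
  "order_complex_space S le = subtopology euclidean
     {t. (\<forall>v. 0 \<le> t v) \<and> (\<forall>v. v \<notin> S \<longrightarrow> t v = 0) \<and> sum t S = 1
         \<and> (\<forall>a\<in>{v\<in>S. t v \<noteq> 0}. \<forall>b\<in>{v\<in>S. t v \<noteq> 0}. le a b \<or> le b a)}"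

definition weak_equivalent ::
  "'a set \<Rightarrow> ('a \<Rightarrow> 'a \<Rightarrow> bool) \<Rightarrow> 'b set \<Rightarrow> ('b \<Rightarrow> 'b \<Rightarrow> bool) \<Rightarrow> bool" where
  "weak_equivalent S le T le' \<longleftrightarrow>
     order_complex_space S le homotopy_equivalent_space order_complex_space T le'"

definition poset_diagram ::
  "'p set \<Rightarrow> ('p \<Rightarrow> 'p \<Rightarrow> bool) \<Rightarrow> ('p \<Rightarrow> 'x set) \<Rightarrow> ('p \<Rightarrow> 'x \<Rightarrow> 'x \<Rightarrow> bool)
    \<Rightarrow> ('p \<Rightarrow> 'p \<Rightarrow> 'x \<Rightarrow> 'x) \<Rightarrow> bool" where
  "poset_diagram P leP X leX f \<longleftrightarrow>
     (\<forall>p\<in>P. finite_poset (X p) (leX p))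
   \<and> (\<forall>p\<in>P. \<forall>q\<in>P. leP p q \<longrightarrow> (\<forall>x\<in>X p. f p q x \<in> X q))
   \<and> (\<forall>p\<in>P. \<forall>q\<in>P. leP p q \<longrightarrow> (\<forall>x\<in>X p. \<forall>y\<in>X p. leX p x y \<longrightarrow> leX q (f p q x) (f p q y)))
   \<and> (\<forall>p\<in>P. \<forall>x\<in>X p. f p p x = x)
   \<and> (\<forall>p\<in>P. \<forall>q\<in>P. \<forall>r\<in>P. leP p q \<and> leP q r \<longrightarrow> (\<forall>x\<in>X p. f q r (f p q x) = f p r x))"

definition hocolim_set :: "'p set \<Rightarrow> ('p \<Rightarrow> 'x set) \<Rightarrow> ('p \<times> 'x) set" where
  "hocolim_set P X = {(p, x). p \<in> P \<and> x \<in> X p}"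

definition hocolim_le ::
  "('p \<Rightarrow> 'p \<Rightarrow> bool) \<Rightarrow> ('p \<Rightarrow> 'x \<Rightarrow> 'x \<Rightarrow> bool) \<Rightarrow> ('p \<Rightarrow> 'p \<Rightarrow> 'x \<Rightarrow> 'x)
    \<Rightarrow> 'p \<times> 'x \<Rightarrow> 'p \<times> 'x \<Rightarrow> bool" where
  "hocolim_le leP leX f a b \<longleftrightarrow> leP (fst a) (fst b) \<and> leX (fst b) (f (fst a) (fst b) (snd a)) (snd b)"

end

theory Submission
  imports Defs
begin


lemma DR:
  fixes T T' :: "('a \<Rightarrow> real) set"
  assumes sub: "T' \<subseteq> T" and cr: "continuous_on T r" and rT: "r ` T \<subseteq> T'"
    and rid: "\<And>t. t \<in> T' \<Longrightarrow> r t = t"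
    and hT: "\<And>s t. s \<in> {0..1} \<Longrightarrow> t \<in> T \<Longrightarrow> (\<lambda>k. s * t k + (1-s) * r t k) \<in> T"
  shows "top_of_set T homotopy_equivalent_space top_of_set T'"
proof (rule deformation_retract_imp_homotopy_equivalent_space)
  let ?h = "\<lambda>z::real \<times> ('a \<Rightarrow> real). \<lambda>k. fst z * snd z k + (1 - fst z) * r (snd z) k"
  have c1: "continuous_on ({0..1} \<times> T) (\<lambda>z::real \<times> ('a \<Rightarrow> real). r (snd z))"
    by (rule continuous_on_compose2[OF cr]) (auto intro: continuous_intros)
  have "continuous_on ({0..1} \<times> T) ?h"
  proof (rule continuous_on_coordinatewise_then_product)
    fix k
    have a: "continuous_on ({0..1} \<times> T) (\<lambda>z::real \<times> ('a \<Rightarrow> real). snd z k)"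
      by (rule continuous_on_product_then_coordinatewise) (auto intro: continuous_intros)
    have b: "continuous_on ({0..1} \<times> T) (\<lambda>z::real \<times> ('a \<Rightarrow> real). r (snd z) k)"
      by (rule continuous_on_product_then_coordinatewise[OF c1])
    show "continuous_on ({0..1} \<times> T) (\<lambda>z. ?h z k)"
      by (intro continuous_intros a b)
  qed
  moreover have "?h \<in> {0..1} \<times> T \<rightarrow> T" using hT by auto
  ultimately show "homotopic_with (\<lambda>x. True) (top_of_set T) (top_of_set T) r id"
    unfolding homotopic_with_def
    by (intro exI[of _ ?h]) auto
  show "retraction_maps (top_of_set T) (top_of_set T') r id"
    unfolding retraction_maps_def using cr rT sub rid
    by (auto simp: continuous_on_id continuous_map_in_subtopology)
qed




definition OCset :: "'a set \<Rightarrow> ('a \<Rightarrow> 'a \<Rightarrow> bool) \<Rightarrow> ('a \<Rightarrow> real) set" where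
 "OCset S le = {t. (\<forall>v. 0 \<le> t v) \<and> (\<forall>v. v \<notin> S \<longrightarrow> t v = 0) \<and> sum t S = 1
         \<and> (\<forall>a\<in>{v\<in>S. t v \<noteq> 0}. \<forall>b\<in>{v\<in>S. t v \<noteq> 0}. le a b \<or> le b a)}"

lemma OC_eq: "order_complex_space S le = top_of_set (OCset S le)"
  by (simp add: order_complex_space_def OCset_def)

lemma sum_ind: "finite S \<Longrightarrow> a \<in> S \<Longrightarrow> (\<Sum>x\<in>S. (if x = a then 1 else 0) * (c::real)) = c"
proof -
  assume "finite S" "a \<in> S"
  have "(\<Sum>x\<in>S. (if x = a then 1 else 0) * c) = (\<Sum>x\<in>S. if x = a then c else 0)"
    by (rule sum.cong) auto
  then show ?thesis using \<open>finite S\<close> \<open>a \<in> S\<close> by simp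
qed

lemma vertex_DR:
  assumes fin: "finite S" and vS: "v \<in> S" and aS: "a \<in> S" and av: "a \<noteq> v"
    and refl: "\<And>y. y \<in> S \<Longrightarrow> le y y" and cav: "le a v \<or> le v a"
    and dom: "\<And>y. y \<in> S \<Longrightarrow> le v y \<or> le y v \<Longrightarrow> y = v \<or> le a y \<or> le y a"
  shows "top_of_set (OCset S le) homotopy_equivalent_space top_of_set (OCset (S - {v}) le)"
proof (rule DR)
  define r where "r = (\<lambda>t::'a\<Rightarrow>real. \<lambda>k. t k + (if k = a then 1 else 0) * t v - (if k = v then 1 else 0) * t v)"
  have sumr: "sum (r t) S = sum t S" for t
    using fin vS aS by (simp add: r_def sum.distrib sum_subtractf sum_ind del: mult_if_delta)
  have rv: "r t v = 0" for t using av by (simp add: r_def)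
  have sumSv: "sum g (S - {v}) = sum g S - g v" for g :: "'a \<Rightarrow> real"
    using fin vS by (simp add: sum_diff1)
  show "OCset (S - {v}) le \<subseteq> OCset S le"
  proof
    fix t assume t: "t \<in> OCset (S - {v}) le"
    then have tv: "t v = 0" by (auto simp: OCset_def)
    with t show "t \<in> OCset S le" unfolding OCset_def using sumSv[of t] by auto
  qed
  show "continuous_on (OCset S le) r"
    unfolding r_def
    by (intro continuous_on_coordinatewise_then_product continuous_intros
        continuous_on_subset[OF continuous_on_product_coordinates] subset_UNIV)
  have chain: "\<forall>x\<in>{k\<in>S. t' k \<noteq> 0}. \<forall>y\<in>{k\<in>S. t' k \<noteq> 0}. le x y \<or> le y x"
    if t: "t \<in> OCset S le" and sup: "\<And>k. t' k \<noteq> 0 \<Longrightarrow> t k \<noteq> 0 \<or> (k = a \<and> t v \<noteq> 0)"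
    for t t'
  proof (intro ballI)
    fix x y assume x: "x \<in> {k\<in>S. t' k \<noteq> 0}" and y: "y \<in> {k\<in>S. t' k \<noteq> 0}"
    have ch: "\<And>x y. x \<in> S \<Longrightarrow> y \<in> S \<Longrightarrow> t x \<noteq> 0 \<Longrightarrow> t y \<noteq> 0 \<Longrightarrow> le x y \<or> le y x"
      using t by (auto simp: OCset_def)
    have ca: "x \<in> S \<Longrightarrow> t x \<noteq> 0 \<Longrightarrow> t v \<noteq> 0 \<Longrightarrow> le x a \<or> le a x" for x
      using ch[of x v] vS dom[of x] refl[of a] aS cav by (cases "x = v") (auto simp: ch)
    show "le x y \<or> le y x"
      using x y sup[of x] sup[of y] ch[of x y] ca[of x] ca[of y] refl[of a] by auto
  qed
  have supr: "r t k \<noteq> 0 \<Longrightarrow> t k \<noteq> 0 \<or> (k = a \<and> t v \<noteq> 0)" for t k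
    using av by (cases "k = a"; cases "k = v") (auto simp: r_def)
  show "r ` OCset S le \<subseteq> OCset (S - {v}) le"
  proof
    fix t' assume "t' \<in> r ` OCset S le"
    then obtain t where t: "t \<in> OCset S le" and t': "t' = r t" by auto
    have nn: "\<And>k. 0 \<le> t k" and out: "\<And>k. k \<notin> S \<Longrightarrow> t k = 0" and s1: "sum t S = 1"
      using t by (auto simp: OCset_def)
    have "0 \<le> t' k" for k using nn[of k] nn[of v] by (auto simp: t' r_def)
    moreover have "k \<notin> S - {v} \<Longrightarrow> t' k = 0" for k using out[of k] aS av by (auto simp: t' r_def)
    moreover have "sum t' (S - {v}) = 1" using sumSv[of t'] sumr[of t] rv[of t] s1 by (simp add: t')
    moreover have "\<forall>x\<in>{k\<in>S - {v}. t' k \<noteq> 0}. \<forall>y\<in>{k\<in>S - {v}. t' k \<noteq> 0}. le x y \<or> le y x"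
      using chain[OF t, of t'] supr[of t] by (auto simp: t')
    ultimately show "t' \<in> OCset (S - {v}) le" unfolding OCset_def by blast
  qed
  show "r t = t" if "t \<in> OCset (S - {v}) le" for t
  proof -
    have "t v = 0" using that by (auto simp: OCset_def)
    then show ?thesis by (auto simp: r_def)
  qed
  show "(\<lambda>k. s * t k + (1 - s) * r t k) \<in> OCset S le" if s: "s \<in> {0..1}" and t: "t \<in> OCset S le" for s t
  proof -
    let ?t' = "\<lambda>k. s * t k + (1 - s) * r t k"
    have nn: "\<And>k. 0 \<le> t k" and out: "\<And>k. k \<notin> S \<Longrightarrow> t k = 0" and s1: "sum t S = 1"
      using t by (auto simp: OCset_def)
    have "0 \<le> ?t' k" for k using nn[of k] nn[of v] s
      by (auto simp: r_def intro!: add_nonneg_nonneg mult_nonneg_nonneg)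
    moreover have "k \<notin> S \<Longrightarrow> ?t' k = 0" for k using out[of k] aS vS by (auto simp: r_def)
    moreover have "sum ?t' S = 1" using sumr[of t] s1
      by (simp add: sum.distrib flip: sum_distrib_left)
    moreover have "\<forall>x\<in>{k\<in>S. ?t' k \<noteq> 0}. \<forall>y\<in>{k\<in>S. ?t' k \<noteq> 0}. le x y \<or> le y x"
    proof (rule chain[OF t])
      fix k assume "?t' k \<noteq> 0"
      then have "t k \<noteq> 0 \<or> r t k \<noteq> 0" by auto
      then show "t k \<noteq> 0 \<or> (k = a \<and> t v \<noteq> 0)" using supr[of t k] by auto
    qed
    ultimately show ?thesis unfolding OCset_def by blast
  qed
qed




lemma edge_DR:
  assumes fin: "finite S" and uS: "u \<in> S" and wS: "w \<in> S" and mS: "m \<in> S"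
    and uw: "u \<noteq> w" and um: "u \<noteq> m" and wm: "w \<noteq> m"
    and refl: "\<And>y. y \<in> S \<Longrightarrow> le y y"
    and cum: "le u m \<or> le m u" and cwm: "le w m \<or> le m w"
    and dom: "\<And>y. y \<in> S \<Longrightarrow> le u y \<or> le y u \<Longrightarrow> le w y \<or> le y w \<Longrightarrow> le m y \<or> le y m"
  shows "top_of_set (OCset S le) homotopy_equivalent_space
         top_of_set (OCset S (\<lambda>a b. le a b \<and> \<not> ((a = u \<and> b = w) \<or> (a = w \<and> b = u))))"
proof (rule DR)
  let ?le' = "\<lambda>a b. le a b \<and> \<not> ((a = u \<and> b = w) \<or> (a = w \<and> b = u))"
  define r where "r = (\<lambda>t::'a\<Rightarrow>real. \<lambda>k. t k - (if k = u then 1 else 0) * min (t u) (t w)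
        - (if k = w then 1 else 0) * min (t u) (t w) + (if k = m then 2 else 0) * min (t u) (t w))"
  have sum2: "(\<Sum>x\<in>S. (if x = m then 2 else 0) * (c::real)) = 2 * c" for c
  proof -
    have "(\<Sum>x\<in>S. (if x = m then 2 else 0) * c) = (\<Sum>x\<in>S. 2 * ((if x = m then 1 else 0) * c))"
      by (rule sum.cong) auto
    then show ?thesis using sum_ind[OF fin mS, of c] by (simp add: sum_distrib_left[symmetric])
  qed
  have sumr: "sum (r t) S = sum t S" for t
    using fin uS wS mS by (simp add: r_def sum.distrib sum_subtractf sum_ind sum2 del: mult_if_delta)
  have ru: "r t u = t u - min (t u) (t w)" and rw: "r t w = t w - min (t u) (t w)" for t
    using uw um wm by (auto simp: r_def)
  have supr: "r t k \<noteq> 0 \<Longrightarrow> t k \<noteq> 0 \<or> (k = m \<and> t u \<noteq> 0 \<and> t w \<noteq> 0)"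
    if "\<And>k. 0 \<le> t k" for t k
    using uw um wm that[of u] that[of w]
    by (cases "k = u"; cases "k = w"; cases "k = m") (auto simp: r_def min_def split: if_splits)
  have chain: "\<forall>x\<in>{k\<in>S. t' k \<noteq> 0}. \<forall>y\<in>{k\<in>S. t' k \<noteq> 0}. le x y \<or> le y x"
    if t: "t \<in> OCset S le" and sup: "\<And>k. t' k \<noteq> 0 \<Longrightarrow> t k \<noteq> 0 \<or> (k = m \<and> t u \<noteq> 0 \<and> t w \<noteq> 0)"
    for t t'
  proof (intro ballI)
    fix x y assume x: "x \<in> {k\<in>S. t' k \<noteq> 0}" and y: "y \<in> {k\<in>S. t' k \<noteq> 0}"
    have ch: "\<And>x y. x \<in> S \<Longrightarrow> y \<in> S \<Longrightarrow> t x \<noteq> 0 \<Longrightarrow> t y \<noteq> 0 \<Longrightarrow> le x y \<or> le y x"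
      using t by (auto simp: OCset_def)
    have cm: "x \<in> S \<Longrightarrow> t x \<noteq> 0 \<Longrightarrow> t u \<noteq> 0 \<Longrightarrow> t w \<noteq> 0 \<Longrightarrow> le x m \<or> le m x" for x
      using ch[of x u] ch[of x w] uS wS dom[of x] by blast
    show "le x y \<or> le y x"
      using x y sup[of x] sup[of y] ch[of x y] cm[of x] cm[of y] refl[of m] mS by auto
  qed
  show "OCset S ?le' \<subseteq> OCset S le"
    unfolding OCset_def by blast
  show "continuous_on (OCset S le) r"
    unfolding r_def
    by (intro continuous_on_coordinatewise_then_product continuous_intros
        continuous_on_subset[OF continuous_on_product_coordinates] subset_UNIV)
  show "r ` OCset S le \<subseteq> OCset S ?le'"
  proof
    fix t' assume "t' \<in> r ` OCset S le"
    then obtain t where t: "t \<in> OCset S le" and t': "t' = r t" by auto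
    have nn: "\<And>k. 0 \<le> t k" and out: "\<And>k. k \<notin> S \<Longrightarrow> t k = 0" and s1: "sum t S = 1"
      using t by (auto simp: OCset_def)
    have "0 \<le> t' k" for k using nn[of k] nn[of u] nn[of w] uw um wm
      by (cases "k = u"; cases "k = w"; cases "k = m") (auto simp: t' r_def min_def)
    moreover have "k \<notin> S \<Longrightarrow> t' k = 0" for k using out[of k] uS wS mS by (auto simp: t' r_def)
    moreover have "sum t' S = 1" using sumr[of t] s1 by (simp add: t')
    moreover have "\<not> (t' u \<noteq> 0 \<and> t' w \<noteq> 0)" by (simp add: t' ru rw min_def)
    moreover have "\<forall>x\<in>{k\<in>S. t' k \<noteq> 0}. \<forall>y\<in>{k\<in>S. t' k \<noteq> 0}. le x y \<or> le y x"
      using chain[OF t, of t'] supr[of t] nn by (auto simp: t')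
    ultimately show "t' \<in> OCset S ?le'" unfolding OCset_def by blast
  qed
  show "r t = t" if "t \<in> OCset S ?le'" for t
  proof -
    have nn: "\<And>k. 0 \<le> t k" using that by (auto simp: OCset_def)
    have "\<not> (t u \<noteq> 0 \<and> t w \<noteq> 0)"
    proof
      assume "t u \<noteq> 0 \<and> t w \<noteq> 0"
      then have "?le' u w \<or> ?le' w u" using that uS wS unfolding OCset_def by blast
      then show False by auto
    qed
    then have "min (t u) (t w) = 0" using nn[of u] nn[of w] by (auto simp: min_def)
    then show ?thesis by (auto simp: r_def)
  qed
  show "(\<lambda>k. s * t k + (1 - s) * r t k) \<in> OCset S le" if s: "s \<in> {0..1}" and t: "t \<in> OCset S le" for s t
  proof -
    let ?t' = "\<lambda>k. s * t k + (1 - s) * r t k"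
    have nn: "\<And>k. 0 \<le> t k" and out: "\<And>k. k \<notin> S \<Longrightarrow> t k = 0" and s1: "sum t S = 1"
      using t by (auto simp: OCset_def)
    have rnn: "0 \<le> r t k" for k using nn[of k] nn[of u] nn[of w] uw um wm
      by (cases "k = u"; cases "k = w"; cases "k = m") (auto simp: r_def min_def split: if_splits)
    have "0 \<le> ?t' k" for k using nn[of k] rnn[of k] s
      by (auto intro!: add_nonneg_nonneg mult_nonneg_nonneg)
    moreover have "k \<notin> S \<Longrightarrow> ?t' k = 0" for k using out[of k] uS wS mS by (auto simp: r_def)
    moreover have "sum ?t' S = 1" using sumr[of t] s1
      by (simp add: sum.distrib flip: sum_distrib_left)
    moreover have "\<forall>x\<in>{k\<in>S. ?t' k \<noteq> 0}. \<forall>y\<in>{k\<in>S. ?t' k \<noteq> 0}. le x y \<or> le y x"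
    proof (rule chain[OF t])
      fix k assume "?t' k \<noteq> 0"
      then have "t k \<noteq> 0 \<or> r t k \<noteq> 0" by auto
      then show "t k \<noteq> 0 \<or> (k = m \<and> t u \<noteq> 0 \<and> t w \<noteq> 0)" using supr[of t k] nn by auto
    qed
    ultimately show ?thesis unfolding OCset_def by blast
  qed
qed




lemma OC_cong:
  assumes "\<And>a b. a \<in> S \<Longrightarrow> b \<in> S \<Longrightarrow> (le a b \<or> le b a) \<longleftrightarrow> (le2 a b \<or> le2 b a)"
  shows "OCset S le = OCset S le2"
  unfolding OCset_def using assms by (intro Collect_cong) blast

definition leN :: "('a \<Rightarrow> 'a \<Rightarrow> bool) \<Rightarrow> 'a \<Rightarrow> 'a set \<Rightarrow> 'a \<Rightarrow> 'a \<Rightarrow> bool" where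
  "leN le x N a b = (if a = x \<and> b \<noteq> x then b \<in> N \<and> le a b
      else if b = x \<and> a \<noteq> x then a \<in> N \<and> le a b else le a b)"

lemma beat_dom:
  assumes po: "finite_poset S le" and ZS: "Z \<subseteq> S" and bp: "beat_point Z le b"
  obtains m where "m \<in> Z" "m \<noteq> b" "le m b \<or> le b m"
    "\<And>z. z \<in> Z \<Longrightarrow> le b z \<or> le z b \<Longrightarrow> le m z \<or> le z m"
proof -
  have refl: "\<And>y. y \<in> S \<Longrightarrow> le y y"
    and tr: "\<And>x y z. x \<in> S \<Longrightarrow> y \<in> S \<Longrightarrow> z \<in> S \<Longrightarrow> le x y \<Longrightarrow> le y z \<Longrightarrow> le x z"
    using po unfolding finite_poset_def by blast+
  have bZ: "b \<in> Z" using bp by (auto simp: beat_point_def up_beat_point_def down_beat_point_def)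
  show ?thesis
  proof (cases "up_beat_point Z le b")
    case True
    then obtain m where m: "is_min_of (up_hat Z le b) le m" by (auto simp: up_beat_point_def)
    then have mZ: "m \<in> Z" "le b m" "b \<noteq> m" and mm: "\<And>a. a \<in> Z \<Longrightarrow> le b a \<Longrightarrow> b \<noteq> a \<Longrightarrow> le m a"
      by (auto simp: is_min_of_def up_hat_def less_in_def)
    show ?thesis
    proof (rule that[of m])
      fix z assume z: "z \<in> Z" "le b z \<or> le z b"
      show "le m z \<or> le z m"
        using z mZ mm[of z] tr[of z b m] ZS bZ refl[of m] by (cases "z = b") auto
    qed (use mZ in auto)
  next
    case False
    then have "down_beat_point Z le b" using bp by (auto simp: beat_point_def)
    then obtain m where m: "is_max_of (down_hat Z le b) le m" by (auto simp: down_beat_point_def)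
    then have mZ: "m \<in> Z" "le m b" "b \<noteq> m" and mm: "\<And>a. a \<in> Z \<Longrightarrow> le a b \<Longrightarrow> a \<noteq> b \<Longrightarrow> le a m"
      by (auto simp: is_max_of_def down_hat_def less_in_def)
    show ?thesis
    proof (rule that[of m])
      fix z assume z: "z \<in> Z" "le b z \<or> le z b"
      show "le m z \<or> le z m"
        using z mZ mm[of z] tr[of m b z] ZS bZ refl[of m] by (cases "z = b") auto
    qed (use mZ in auto)
  qed
qed

lemma contractible_nonempty: "contractible_fs le Z \<Longrightarrow> Z \<noteq> {}"
  by (induction rule: contractible_fs.induct) auto




lemma leN_simps:
  "z \<noteq> x \<Longrightarrow> leN le x N x z \<longleftrightarrow> z \<in> N \<and> le x z"
  "z \<noteq> x \<Longrightarrow> leN le x N z x \<longleftrightarrow> z \<in> N \<and> le z x"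
  "c \<noteq> x \<Longrightarrow> d \<noteq> x \<Longrightarrow> leN le x N c d \<longleftrightarrow> le c d"
  "leN le x N z z \<longleftrightarrow> le z z"
  by (auto simp: leN_def)

lemma W_aux:
  assumes po: "finite_poset S le" and xS: "x \<in> S" and cZ: "contractible_fs le Z"
  shows "Z \<subseteq> down_hat S le x \<Longrightarrow> G \<subseteq> up_hat S le x \<Longrightarrow>
    top_of_set (OCset S (leN le x (Z \<union> G))) homotopy_equivalent_space top_of_set (OCset (S - {x}) le)"
  using cZ
proof (induction arbitrary: G rule: contractible_fs.induct)
  have fin: "finite S" and refl: "\<And>y. y \<in> S \<Longrightarrow> le y y"
    and anti: "\<And>x y. x \<in> S \<Longrightarrow> y \<in> S \<Longrightarrow> le x y \<Longrightarrow> le y x \<Longrightarrow> x = y"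
    and tr: "\<And>x y z. x \<in> S \<Longrightarrow> y \<in> S \<Longrightarrow> z \<in> S \<Longrightarrow> le x y \<Longrightarrow> le y z \<Longrightarrow> le x z"
    using po unfolding finite_poset_def by blast+
  case (single a)
  then have aS: "a \<in> S" and ax: "le a x" "a \<noteq> x" by (auto simp: down_hat_def less_in_def)
  have fG: "finite G" using single(2) fin by (auto simp: up_hat_def intro: finite_subset)
  show ?case using fG single(2)
  proof (induction G rule: finite_induct)
    case empty
    have "top_of_set (OCset S (leN le x ({a} \<union> {}))) homotopy_equivalent_space
          top_of_set (OCset (S - {x}) (leN le x ({a} \<union> {})))"
    proof (rule vertex_DR[OF fin xS aS ax(2)])
      show "\<And>y. y \<in> S \<Longrightarrow> leN le x ({a} \<union> {}) y y" using refl by (auto simp: leN_def)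
      show "leN le x ({a} \<union> {}) a x \<or> leN le x ({a} \<union> {}) x a" using ax by (auto simp: leN_def)
      show "\<And>y. y \<in> S \<Longrightarrow> leN le x ({a} \<union> {}) x y \<or> leN le x ({a} \<union> {}) y x \<Longrightarrow>
         y = x \<or> leN le x ({a} \<union> {}) a y \<or> leN le x ({a} \<union> {}) y a"
        using refl aS ax by (auto simp: leN_def)
    qed
    moreover have "OCset (S - {x}) (leN le x ({a} \<union> {})) = OCset (S - {x}) le"
      by (rule OC_cong) (auto simp: leN_def)
    ultimately show ?case by simp
  next
    case (insert y G0)
    have yS: "y \<in> S" and xy: "le x y" "x \<noteq> y" using insert(4) by (auto simp: up_hat_def less_in_def)
    have ya: "y \<noteq> a" using anti[OF xS aS] xy ax by auto
    have G0F: "\<And>z. z \<in> G0 \<Longrightarrow> z \<in> S \<and> le x z \<and> z \<noteq> x" using insert(4) by (auto simp: up_hat_def less_in_def)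
    let ?le = "leN le x ({a} \<union> insert y G0)"
    have "top_of_set (OCset S ?le) homotopy_equivalent_space
       top_of_set (OCset S (\<lambda>c d. ?le c d \<and> \<not> ((c = x \<and> d = y) \<or> (c = y \<and> d = x))))"
    proof (rule edge_DR[OF fin xS yS aS xy(2) ax(2)[symmetric] ya])
      show "\<And>z. z \<in> S \<Longrightarrow> ?le z z" using refl by (auto simp: leN_def)
      show "?le x a \<or> ?le a x" using ax by (auto simp: leN_def)
      show "?le y a \<or> ?le a y" using ax xy ya tr[OF aS xS yS] by (auto simp: leN_def)
      show "?le a z \<or> ?le z a" if "z \<in> S" "?le x z \<or> ?le z x" "?le y z \<or> ?le z y" for z
      proof (cases "z = x")
        case True then show ?thesis using ax by (simp add: leN_simps)
      next
        case False
        then have "z \<in> {a} \<union> insert y G0" using that(2) by (simp add: leN_simps False, blast)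
        then have "z = a \<or> le x z" using xy G0F[of z] by blast
        then have "le a z" using refl[OF aS] tr[OF aS xS that(1)] ax by blast
        then show ?thesis using False ax leN_simps(3)[OF ax(2) False] by simp
      qed
    qed
    moreover have "(\<lambda>c d. ?le c d \<and> \<not> ((c = x \<and> d = y) \<or> (c = y \<and> d = x)))
       = leN le x ({a} \<union> G0)"
    proof (intro ext)
      fix c d
      show "(?le c d \<and> \<not> ((c = x \<and> d = y) \<or> (c = y \<and> d = x))) = leN le x ({a} \<union> G0) c d"
        unfolding leN_def using insert(2) ya xy(2) by auto
    qed
    ultimately have h1: "top_of_set (OCset S ?le) homotopy_equivalent_space top_of_set (OCset S (leN le x ({a} \<union> G0)))"
      by simp
    have h2: "top_of_set (OCset S (leN le x ({a} \<union> G0))) homotopy_equivalent_space top_of_set (OCset (S - {x}) le)"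
      using insert.IH insert.prems by blast
    show ?case by (rule homotopy_eqv_trans[OF h1 h2])
  qed
next
  have fin: "finite S" and refl: "\<And>y. y \<in> S \<Longrightarrow> le y y"
    and anti: "\<And>x y. x \<in> S \<Longrightarrow> y \<in> S \<Longrightarrow> le x y \<Longrightarrow> le y x \<Longrightarrow> x = y"
    and tr: "\<And>x y z. x \<in> S \<Longrightarrow> y \<in> S \<Longrightarrow> z \<in> S \<Longrightarrow> le x y \<Longrightarrow> le y z \<Longrightarrow> le x z"
    using po unfolding finite_poset_def by blast+
  case (remove Z b)
  have ZS: "Z \<subseteq> S" using remove(4) by (auto simp: down_hat_def)
  have ZD: "\<And>z. z \<in> Z \<Longrightarrow> z \<in> S \<and> le z x \<and> z \<noteq> x" using remove(4) by (auto simp: down_hat_def less_in_def)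
  have GF: "\<And>z. z \<in> G \<Longrightarrow> z \<in> S \<and> le x z \<and> z \<noteq> x" using remove(5) by (auto simp: up_hat_def less_in_def)
  have bZ: "b \<in> Z" using remove(1) by (auto simp: beat_point_def up_beat_point_def down_beat_point_def)
  obtain m where m: "m \<in> Z" "m \<noteq> b" "le m b \<or> le b m"
    and md: "\<And>z. z \<in> Z \<Longrightarrow> le b z \<or> le z b \<Longrightarrow> le m z \<or> le z m"
    using beat_dom[OF po ZS remove(1)] by blast
  have bS: "b \<in> S" "le b x" "b \<noteq> x" using ZD[OF bZ] by auto
  have bG: "b \<notin> G" using bS GF[of b] anti[OF xS bS(1)] by blast
  have mS: "m \<in> S" "le m x" "m \<noteq> x" using ZD[OF m(1)] by auto
  let ?le = "leN le x (Z \<union> G)"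
  have "top_of_set (OCset S ?le) homotopy_equivalent_space
       top_of_set (OCset S (\<lambda>c d. ?le c d \<and> \<not> ((c = x \<and> d = b) \<or> (c = b \<and> d = x))))"
  proof (rule edge_DR[OF fin xS bS(1) mS(1) bS(3)[symmetric] mS(3)[symmetric] m(2)[symmetric]])
    show "\<And>z. z \<in> S \<Longrightarrow> ?le z z" using refl by (simp add: leN_simps)
    show "?le x m \<or> ?le m x" using mS m(1) by (simp add: leN_simps)
    show "?le b m \<or> ?le m b" using m(3) bS mS by (simp add: leN_simps, blast)
    show "?le m z \<or> ?le z m" if "z \<in> S" "?le x z \<or> ?le z x" "?le b z \<or> ?le z b" for z
    proof (cases "z = x")
      case True then show ?thesis using mS m(1) by (simp add: leN_simps)
    next
      case False
      then have zN: "z \<in> Z \<union> G" using that(2) by (simp add: leN_simps False, blast)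
      have bz: "le b z \<or> le z b" using that(3) bS False by (simp add: leN_simps)
      have "le m z \<or> le z m"
      proof (cases "z \<in> Z")
        case True then show ?thesis using md[of z] bz by blast
      next
        case F: False
        then have "z \<in> G" using zN by blast
        then have "le m z" using GF[of z] tr[OF mS(1) xS that(1)] mS by blast
        then show ?thesis by blast
      qed
      then show ?thesis using False mS by (simp add: leN_simps)
    qed
  qed
  moreover have "(\<lambda>c d. ?le c d \<and> \<not> ((c = x \<and> d = b) \<or> (c = b \<and> d = x)))
       = leN le x ((Z - {b}) \<union> G)"
  proof (intro ext)
    fix c d
    show "(?le c d \<and> \<not> ((c = x \<and> d = b) \<or> (c = b \<and> d = x))) = leN le x ((Z - {b}) \<union> G) c d"
      unfolding leN_def using bG bS(3) by auto
  qed
  ultimately have h1: "top_of_set (OCset S ?le) homotopy_equivalent_space top_of_set (OCset S (leN le x ((Z - {b}) \<union> G)))"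
    by simp
  have h2: "top_of_set (OCset S (leN le x ((Z - {b}) \<union> G))) homotopy_equivalent_space top_of_set (OCset (S - {x}) le)"
    by (rule remove.IH) (use remove.prems in auto)
  show ?case by (rule homotopy_eqv_trans[OF h1 h2])
qed

lemma weak_point_heq:
  assumes po: "finite_poset S le" and xS: "x \<in> S" and cZ: "contractible_fs le (down_hat S le x)"
  shows "order_complex_space S le homotopy_equivalent_space order_complex_space (S - {x}) le"
proof -
  have "OCset S le = OCset S (leN le x (down_hat S le x \<union> up_hat S le x))"
  proof (rule OC_cong)
    fix c d assume c: "c \<in> S" and d: "d \<in> S"
    show "(le c d \<or> le d c) = (leN le x (down_hat S le x \<union> up_hat S le x) c d \<or> leN le x (down_hat S le x \<union> up_hat S le x) d c)"
      unfolding leN_def using c d by (auto simp: down_hat_def up_hat_def less_in_def)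
  qed
  then show ?thesis using W_aux[OF po xS cZ, of "up_hat S le x"] by (simp add: OC_eq)
qed




lemma fp_subset: "finite_poset S le \<Longrightarrow> Y \<subseteq> S \<Longrightarrow> finite_poset Y le"
  unfolding finite_poset_def by (meson finite_subset subsetD)

lemma exists_maximal:
  assumes "finite M" "M \<noteq> {}" "M \<subseteq> S" "finite_poset S le"
  shows "\<exists>a\<in>M. \<forall>b\<in>M. le a b \<longrightarrow> b = a"
  using assms
proof (induction M rule: finite_ne_induct)
  case (singleton x) then show ?case by auto
next
  case (insert x M)
  have anti: "\<And>x y. x \<in> S \<Longrightarrow> y \<in> S \<Longrightarrow> le x y \<Longrightarrow> le y x \<Longrightarrow> x = y"
    and tr: "\<And>x y z. x \<in> S \<Longrightarrow> y \<in> S \<Longrightarrow> z \<in> S \<Longrightarrow> le x y \<Longrightarrow> le y z \<Longrightarrow> le x z"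
    using insert.prems unfolding finite_poset_def by blast+
  obtain m where m: "m \<in> M" "\<forall>b\<in>M. le m b \<longrightarrow> b = m" using insert by auto
  have xS: "x \<in> S" and MS: "M \<subseteq> S" using insert.prems by auto
  show ?case
  proof (cases "le m x")
    case True
    have "\<forall>b\<in>insert x M. le x b \<longrightarrow> b = x"
    proof (intro ballI impI)
      fix b assume b: "b \<in> insert x M" "le x b"
      show "b = x"
      proof (rule ccontr)
        assume "b \<noteq> x"
        then have bM: "b \<in> M" using b by auto
        then have "le m b" using tr[OF _ xS, of m b] True b m MS by auto
        then have "b = m" using m bM by auto
        then show False using anti[OF xS, of m] True b MS m \<open>b \<noteq> x\<close> by auto
      qed
    qed
    then show ?thesis by auto
  next
    case False
    then show ?thesis using m by auto
  qed
qed

lemma closure_contr_aux: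
  "n = card (A - c ` A) \<Longrightarrow> finite_poset A le \<Longrightarrow> c ` A \<subseteq> A \<Longrightarrow> (\<forall>a\<in>A. le a (c a)) \<Longrightarrow>
   (\<forall>a\<in>A. \<forall>b\<in>A. le a b \<longrightarrow> le (c a) (c b)) \<Longrightarrow> (\<forall>a\<in>A. c (c a) = c a) \<Longrightarrow>
   contractible_fs le (c ` A) \<Longrightarrow> contractible_fs le A"
proof (induction n arbitrary: A rule: less_induct)
  case (less n A)
  have finA: "finite A" using less.prems unfolding finite_poset_def by blast
  show ?case
  proof (cases "A - c ` A = {}")
    case True
    then have "A = c ` A" using less.prems(3) by blast
    then show ?thesis using less.prems(7) by simp
  next
    case False
    obtain a where aM: "a \<in> A - c ` A" and amax: "\<forall>b\<in>A - c ` A. le a b \<longrightarrow> b = a"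
      using exists_maximal[OF _ False _ less.prems(2)] finA by blast
    have aA: "a \<in> A" and anc: "a \<notin> c ` A" using aM by auto
    have caA: "c a \<in> A" using less.prems(3) aA by blast
    have ca_ne: "a \<noteq> c a"
    proof
      assume "a = c a"
      then have "a \<in> c ` A" using aA by (metis imageI)
      then show False using anc by blast
    qed
    have idemA: "\<And>b. b \<in> c ` A \<Longrightarrow> c b = b" using less.prems(6) by auto
    have bp: "beat_point A le a"
      unfolding beat_point_def up_beat_point_def
    proof (intro disjI1 conjI exI)
      show "a \<in> A" by (rule aA)
      show "is_min_of (up_hat A le a) le (c a)"
        unfolding is_min_of_def up_hat_def less_in_def
      proof (intro conjI ballI)
        have "le a (c a)" using less.prems(4) aA by blast
        then show "c a \<in> {y \<in> A. le a y \<and> a \<noteq> y}" using caA ca_ne by blast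
        fix b assume b: "b \<in> {y \<in> A. le a y \<and> a \<noteq> y}"
        then have "b \<in> c ` A" using amax by blast
        then have cb: "c b = b" by (rule idemA)
        have "le (c a) (c b)" using less.prems(5) aA b by blast
        then show "le (c a) b" using cb by simp
      qed
    qed
    let ?A = "A - {a}"
    have cA': "c ` ?A = c ` A"
    proof
      show "c ` ?A \<subseteq> c ` A" by blast
      show "c ` A \<subseteq> c ` ?A"
      proof
        fix y assume "y \<in> c ` A"
        then obtain b where b: "b \<in> A" "y = c b" by auto
        show "y \<in> c ` ?A"
        proof (cases "b = a")
          case True
          then have "y = c (c a)" using b less.prems(6) aA by simp
          moreover have "c a \<in> ?A" using caA ca_ne by auto
          ultimately show ?thesis by blast
        next
          case False then show ?thesis using b by blast
        qed
      qed
    qed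
    have h1: "?A - c ` ?A = (A - c ` A) - {a}" using cA' by auto
    have fM: "finite (A - c ` A)" using finA by simp
    have "card (A - c ` A - {a}) < card (A - c ` A)" using fM aM by (rule card_Diff1_less)
    then have h2: "card (?A - c ` ?A) < n" unfolding h1 using less.prems(1) by simp
    have h3: "finite_poset ?A le" using fp_subset less.prems(2) by blast
    have h4: "c ` ?A \<subseteq> ?A" using cA' less.prems(3) anc by auto
    have h5: "\<forall>b\<in>?A. le b (c b)" using less.prems(4) by blast
    have h6: "\<forall>x\<in>?A. \<forall>y\<in>?A. le x y \<longrightarrow> le (c x) (c y)" using less.prems(5) by blast
    have h7: "\<forall>x\<in>?A. c (c x) = c x" using less.prems(6) by blast
    have h8: "contractible_fs le (c ` ?A)" using less.prems(7) cA' by simp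
    have "contractible_fs le ?A" by (rule less.IH[OF h2 HOL.refl h3 h4 h5 h6 h7 h8])
    then show ?thesis by (rule contractible_fs.remove[OF bp])
  qed
qed

lemma closure_contr:
  "finite_poset A le \<Longrightarrow> c ` A \<subseteq> A \<Longrightarrow> (\<forall>a\<in>A. le a (c a)) \<Longrightarrow>
   (\<forall>a\<in>A. \<forall>b\<in>A. le a b \<longrightarrow> le (c a) (c b)) \<Longrightarrow> (\<forall>a\<in>A. c (c a) = c a) \<Longrightarrow>
   contractible_fs le (c ` A) \<Longrightarrow> contractible_fs le A"
  by (rule closure_contr_aux[OF HOL.refl])

lemma iso_contr:
  assumes "contractible_fs le1 B"
  shows "inj_on g B \<Longrightarrow> (\<forall>a\<in>B. \<forall>b\<in>B. le2 (g a) (g b) = le1 a b) \<Longrightarrow> contractible_fs le2 (g ` B)"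
  using assms
proof (induction rule: contractible_fs.induct)
  case (single a) then show ?case by (simp add: contractible_fs.single)
next
  case (remove Y x)
  have xY: "x \<in> Y" using remove(1) by (auto simp: beat_point_def up_beat_point_def down_beat_point_def)
  have img: "g ` (Y - {x}) = g ` Y - {g x}" using remove.prems(1) xY by (auto simp: inj_on_def)
  have IH: "contractible_fs le2 (g ` (Y - {x}))"
    by (rule remove.IH) (use remove.prems in \<open>auto simp: inj_on_def\<close>)
  have iso: "\<And>a b. a \<in> Y \<Longrightarrow> b \<in> Y \<Longrightarrow> le2 (g a) (g b) = le1 a b" using remove.prems(2) by blast
  have inj: "\<And>a b. a \<in> Y \<Longrightarrow> b \<in> Y \<Longrightarrow> g a = g b \<longleftrightarrow> a = b" using remove.prems(1) by (auto simp: inj_on_def)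
  have "beat_point (g ` Y) le2 (g x)"
  proof (cases "up_beat_point Y le1 x")
    case True
    then obtain m where m: "is_min_of (up_hat Y le1 x) le1 m" by (auto simp: up_beat_point_def)
    have "is_min_of (up_hat (g ` Y) le2 (g x)) le2 (g m)"
      using m xY unfolding is_min_of_def up_hat_def less_in_def
      by (auto simp: iso inj)
    then show ?thesis using xY by (auto simp: beat_point_def up_beat_point_def)
  next
    case False
    then have "down_beat_point Y le1 x" using remove(1) by (auto simp: beat_point_def)
    then obtain m where m: "is_max_of (down_hat Y le1 x) le1 m" by (auto simp: down_beat_point_def)
    have "is_max_of (down_hat (g ` Y) le2 (g x)) le2 (g m)"
      using m xY unfolding is_max_of_def down_hat_def less_in_def
      by (auto simp: iso inj)
    then show ?thesis using xY by (auto simp: beat_point_def down_beat_point_def)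
  qed
  then show ?case by (rule contractible_fs.remove) (use IH img in simp)
qed




context
  fixes P :: "'p set" and leP :: "'p \<Rightarrow> 'p \<Rightarrow> bool"
    and X :: "'p \<Rightarrow> 'x set" and leX :: "'p \<Rightarrow> 'x \<Rightarrow> 'x \<Rightarrow> bool"
    and f :: "'p \<Rightarrow> 'p \<Rightarrow> 'x \<Rightarrow> 'x" and p q :: 'p
  assumes fpP: "finite_poset P leP"
    and dia: "poset_diagram P leP X leX f"
    and pP: "p \<in> P"
    and qmax: "is_max_of (down_hat P leP p) leP q"
    and hyp: "\<forall>x\<in>X p. contractible_fs (leX q) {y\<in>X q. leX p (f q p y) x}"
begin

lemma dX: "r \<in> P \<Longrightarrow> finite_poset (X r) (leX r)"
  using dia unfolding poset_diagram_def by blast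
lemma fX: "r \<in> P \<Longrightarrow> s \<in> P \<Longrightarrow> leP r s \<Longrightarrow> y \<in> X r \<Longrightarrow> f r s y \<in> X s"
  using dia unfolding poset_diagram_def by blast
lemma fmono: "r \<in> P \<Longrightarrow> s \<in> P \<Longrightarrow> leP r s \<Longrightarrow> y \<in> X r \<Longrightarrow> z \<in> X r \<Longrightarrow> leX r y z \<Longrightarrow> leX s (f r s y) (f r s z)"
  using dia unfolding poset_diagram_def by blast
lemma fid: "r \<in> P \<Longrightarrow> y \<in> X r \<Longrightarrow> f r r y = y"
  using dia unfolding poset_diagram_def by blast
lemma fcomp: "r \<in> P \<Longrightarrow> s \<in> P \<Longrightarrow> t \<in> P \<Longrightarrow> leP r s \<Longrightarrow> leP s t \<Longrightarrow> y \<in> X r \<Longrightarrow> f s t (f r s y) = f r t y"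
  using dia unfolding poset_diagram_def by blast

lemma reflP: "r \<in> P \<Longrightarrow> leP r r" using fpP unfolding finite_poset_def by blast
lemma antiP: "r \<in> P \<Longrightarrow> s \<in> P \<Longrightarrow> leP r s \<Longrightarrow> leP s r \<Longrightarrow> r = s" using fpP unfolding finite_poset_def by blast
lemma trP: "r \<in> P \<Longrightarrow> s \<in> P \<Longrightarrow> t \<in> P \<Longrightarrow> leP r s \<Longrightarrow> leP s t \<Longrightarrow> leP r t" using fpP unfolding finite_poset_def by blast

lemma reflX: "r \<in> P \<Longrightarrow> y \<in> X r \<Longrightarrow> leX r y y" using dX unfolding finite_poset_def by blast
lemma antiX: "r \<in> P \<Longrightarrow> y \<in> X r \<Longrightarrow> z \<in> X r \<Longrightarrow> leX r y z \<Longrightarrow> leX r z y \<Longrightarrow> y = z" using dX unfolding finite_poset_def by blast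
lemma trX: "r \<in> P \<Longrightarrow> y \<in> X r \<Longrightarrow> z \<in> X r \<Longrightarrow> w \<in> X r \<Longrightarrow> leX r y z \<Longrightarrow> leX r z w \<Longrightarrow> leX r y w" using dX unfolding finite_poset_def by blast

lemma qP: "q \<in> P" "leP q p" "q \<noteq> p"
  using qmax by (auto simp: is_max_of_def down_hat_def less_in_def)
lemma qm: "r \<in> P \<Longrightarrow> leP r p \<Longrightarrow> r \<noteq> p \<Longrightarrow> leP r q"
  using qmax by (auto simp: is_max_of_def down_hat_def less_in_def)

lemma H_eq: "hocolim_set P X = Sigma P X" by (auto simp: hocolim_set_def)

lemma H_po: "finite_poset (hocolim_set P X) (hocolim_le leP leX f)"
proof -
  have fin: "finite (hocolim_set P X)"
    unfolding H_eq using fpP dX by (auto simp: finite_poset_def intro!: finite_SigmaI)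
  have refl: "\<forall>z\<in>hocolim_set P X. hocolim_le leP leX f z z"
    by (auto simp: H_eq hocolim_le_def reflP fid reflX)
  have anti: "\<forall>z\<in>hocolim_set P X. \<forall>w\<in>hocolim_set P X. hocolim_le leP leX f z w \<and> hocolim_le leP leX f w z \<longrightarrow> z = w"
  proof (intro ballI impI)
    fix z w assume z: "z \<in> hocolim_set P X" and w: "w \<in> hocolim_set P X"
      and zw: "hocolim_le leP leX f z w \<and> hocolim_le leP leX f w z"
    obtain r y where zz: "z = (r, y)" "r \<in> P" "y \<in> X r" using z by (auto simp: H_eq)
    obtain s u where ww: "w = (s, u)" "s \<in> P" "u \<in> X s" using w by (auto simp: H_eq)
    have "r = s" using zw zz ww antiP by (auto simp: hocolim_le_def)
    then show "z = w" using zw zz ww antiX fid by (auto simp: hocolim_le_def)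
  qed
  have tr: "\<forall>z\<in>hocolim_set P X. \<forall>w\<in>hocolim_set P X. \<forall>v\<in>hocolim_set P X.
     hocolim_le leP leX f z w \<and> hocolim_le leP leX f w v \<longrightarrow> hocolim_le leP leX f z v"
  proof (intro ballI impI)
    fix z w v assume z: "z \<in> hocolim_set P X" and w: "w \<in> hocolim_set P X" and v: "v \<in> hocolim_set P X"
      and zw: "hocolim_le leP leX f z w \<and> hocolim_le leP leX f w v"
    obtain r y where zz: "z = (r, y)" "r \<in> P" "y \<in> X r" using z by (auto simp: H_eq)
    obtain s u where ww: "w = (s, u)" "s \<in> P" "u \<in> X s" using w by (auto simp: H_eq)
    obtain tt kk where vv: "v = (tt, kk)" "tt \<in> P" "kk \<in> X tt" using v by (auto simp: H_eq)
    have rs: "leP r s" and st: "leP s tt" and l1: "leX s (f r s y) u" and l2: "leX tt (f s tt u) kk"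
      using zw zz ww vv by (auto simp: hocolim_le_def)
    have rt: "leP r tt" using trP[OF zz(2) ww(2) vv(2) rs st] .
    have a1: "f r s y \<in> X s" using fX[OF zz(2) ww(2) rs zz(3)] .
    have "leX tt (f s tt (f r s y)) (f s tt u)" using fmono[OF ww(2) vv(2) st a1 ww(3) l1] .
    then have "leX tt (f r tt y) (f s tt u)" using fcomp[OF zz(2) ww(2) vv(2) rs st zz(3)] by simp
    then have "leX tt (f r tt y) kk"
      using trX[OF vv(2) fX[OF zz(2) vv(2) rt zz(3)] fX[OF ww(2) vv(2) st ww(3)] vv(3) _ l2] by blast
    then show "hocolim_le leP leX f z v" using rt zz vv by (simp add: hocolim_le_def)
  qed
  show ?thesis unfolding finite_poset_def using fin refl anti tr by blast
qed

lemma Ax_contr: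
  assumes xX: "x \<in> X p"
  shows "contractible_fs (hocolim_le leP leX f)
     {z \<in> hocolim_set P X. fst z \<in> down_hat P leP p \<and> leX p (f (fst z) p (snd z)) x}"
proof -
  define A where "A = {z \<in> hocolim_set P X. fst z \<in> down_hat P leP p \<and> leX p (f (fst z) p (snd z)) x}"
  define c where "c = (\<lambda>z::'p \<times> 'x. (q, f (fst z) q (snd z)))"
  define B where "B = {y\<in>X q. leX p (f q p y) x}"
  let ?hle = "hocolim_le leP leX f"
  have memA: "z \<in> A \<longleftrightarrow> fst z \<in> P \<and> snd z \<in> X (fst z) \<and> leP (fst z) p \<and> fst z \<noteq> p
      \<and> leX p (f (fst z) p (snd z)) x" for z
    by (cases z) (auto simp: A_def H_eq down_hat_def less_in_def)
  have rq: "z \<in> A \<Longrightarrow> leP (fst z) q" for z using memA[of z] qm by blast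
  have cA: "c ` A \<subseteq> A"
  proof
    fix w assume "w \<in> c ` A"
    then obtain z where z: "z \<in> A" "w = c z" by blast
    have zP: "fst z \<in> P" "snd z \<in> X (fst z)" "leP (fst z) p" using z(1) memA by blast+
    have fz: "f (fst z) q (snd z) \<in> X q" using fX[OF zP(1) qP(1) rq[OF z(1)] zP(2)] .
    have "f q p (f (fst z) q (snd z)) = f (fst z) p (snd z)"
      using fcomp[OF zP(1) qP(1) pP rq[OF z(1)] qP(2) zP(2)] .
    then show "w \<in> A" unfolding memA using z qP fz memA[of z] by (simp add: c_def)
  qed
  have ext: "\<forall>z\<in>A. ?hle z (c z)"
  proof
    fix z assume z: "z \<in> A"
    have zP: "fst z \<in> P" "snd z \<in> X (fst z)" using z memA by blast+
    have fz: "f (fst z) q (snd z) \<in> X q" using fX[OF zP(1) qP(1) rq[OF z] zP(2)] .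
    show "?hle z (c z)" using rq[OF z] reflX[OF qP(1) fz] by (simp add: c_def hocolim_le_def)
  qed
  have mono: "\<forall>z\<in>A. \<forall>w\<in>A. ?hle z w \<longrightarrow> ?hle (c z) (c w)"
  proof (intro ballI impI)
    fix z w assume z: "z \<in> A" and w: "w \<in> A" and zw: "?hle z w"
    have zP: "fst z \<in> P" "snd z \<in> X (fst z)" using z memA by blast+
    have wP: "fst w \<in> P" "snd w \<in> X (fst w)" using w memA by blast+
    have rs: "leP (fst z) (fst w)" and l: "leX (fst w) (f (fst z) (fst w) (snd z)) (snd w)"
      using zw by (auto simp: hocolim_le_def)
    have a1: "f (fst z) (fst w) (snd z) \<in> X (fst w)" using fX[OF zP(1) wP(1) rs zP(2)] .
    have "leX q (f (fst w) q (f (fst z) (fst w) (snd z))) (f (fst w) q (snd w))"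
      using fmono[OF wP(1) qP(1) rq[OF w] a1 wP(2) l] .
    then have "leX q (f (fst z) q (snd z)) (f (fst w) q (snd w))"
      using fcomp[OF zP(1) wP(1) qP(1) rs rq[OF w] zP(2)] by simp
    moreover have "f (fst z) q (snd z) \<in> X q" using fX[OF zP(1) qP(1) rq[OF z] zP(2)] .
    ultimately show "?hle (c z) (c w)" using reflP[OF qP(1)] fid[OF qP(1)] by (simp add: c_def hocolim_le_def)
  qed
  have idem: "\<forall>z\<in>A. c (c z) = c z"
  proof
    fix z assume z: "z \<in> A"
    have zP: "fst z \<in> P" "snd z \<in> X (fst z)" using z memA by blast+
    have fz: "f (fst z) q (snd z) \<in> X q" using fX[OF zP(1) qP(1) rq[OF z] zP(2)] .
    show "c (c z) = c z" using fid[OF qP(1) fz] by (simp add: c_def)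
  qed
  have cimg: "c ` A = Pair q ` B"
  proof
    show "c ` A \<subseteq> Pair q ` B"
    proof
      fix w assume "w \<in> c ` A"
      then obtain z where z: "z \<in> A" "w = c z" by blast
      have "w \<in> A" using cA z by blast
      then have "snd w \<in> B" using memA[of w] z by (simp add: B_def c_def)
      then show "w \<in> Pair q ` B" using z by (simp add: c_def)
    qed
    show "Pair q ` B \<subseteq> c ` A"
    proof
      fix w assume "w \<in> Pair q ` B"
      then obtain b where b: "b \<in> B" "w = (q, b)" by blast
      have bX: "b \<in> X q" "leX p (f q p b) x" using b by (auto simp: B_def)
      have wA: "w \<in> A" unfolding memA using b bX qP by simp
      have "c w = w" using fid[OF qP(1) bX(1)] b by (simp add: c_def)
      then show "w \<in> c ` A" using wA by (metis imageI)
    qed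
  qed
  have Bsub: "B \<subseteq> X q" by (auto simp: B_def)
  have "contractible_fs ?hle (Pair q ` B)"
  proof (rule iso_contr)
    show "contractible_fs (leX q) B" using hyp xX by (simp add: B_def)
    show "inj_on (Pair q) B" by (simp add: inj_on_def)
    show "\<forall>a\<in>B. \<forall>b\<in>B. ?hle (q, a) (q, b) = leX q a b"
      using Bsub reflP[OF qP(1)] fid[OF qP(1)] by (auto simp: hocolim_le_def)
  qed
  then have "contractible_fs ?hle (c ` A)" using cimg by simp
  moreover have "finite_poset A ?hle" using fp_subset[OF H_po] by (simp add: A_def)
  ultimately have "contractible_fs ?hle A" using closure_contr[OF _ cA ext mono idem] by blast
  then show ?thesis by (simp add: A_def)
qed

lemma main_ind:
  "E \<subseteq> X p \<Longrightarrow>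
   collapses (hocolim_le leP leX f) {z \<in> hocolim_set P X. fst z \<noteq> p \<or> snd z \<in> E} (hocolim_set (P - {p}) X)
   \<and> order_complex_space {z \<in> hocolim_set P X. fst z \<noteq> p \<or> snd z \<in> E} (hocolim_le leP leX f)
       homotopy_equivalent_space order_complex_space (hocolim_set (P - {p}) X) (hocolim_le leP leX f)"
proof (induction "card E" arbitrary: E rule: less_induct)
  case (less E)
  let ?hle = "hocolim_le leP leX f"
  let ?Y = "{z \<in> hocolim_set P X. fst z \<noteq> p \<or> snd z \<in> E}"
  let ?H' = "hocolim_set (P - {p}) X"
  have finXp: "finite (X p)" using dX[OF pP] unfolding finite_poset_def by blast
  have finE: "finite E" using less.prems finXp by (rule finite_subset)
  show ?case
  proof (cases "E = {}")
    case True
    have "?Y = ?H'" using True by (auto simp: hocolim_set_def)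
    then show ?thesis by (simp add: collapses.refl homotopy_equivalent_space_refl)
  next
    case False
    have "\<exists>a\<in>E. \<forall>b\<in>E. (\<lambda>u v. leX p v u) a b \<longrightarrow> b = a"
    proof (rule exists_maximal[OF finE False less.prems])
      show "finite_poset (X p) (\<lambda>u v. leX p v u)" using dX[OF pP] unfolding finite_poset_def by blast
    qed
    then obtain x where xE: "x \<in> E" and xmin: "\<And>b. b \<in> E \<Longrightarrow> leX p b x \<Longrightarrow> b = x" by blast
    have xX: "x \<in> X p" using xE less.prems by blast
    let ?A = "{z \<in> hocolim_set P X. fst z \<in> down_hat P leP p \<and> leX p (f (fst z) p (snd z)) x}"
    have dh: "down_hat ?Y ?hle (p, x) = ?A"
    proof (rule set_eqI)
      fix z :: "'p \<times> 'x"
      obtain r y where z: "z = (r, y)" by (cases z)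
      show "z \<in> down_hat ?Y ?hle (p, x) \<longleftrightarrow> z \<in> ?A"
      proof
        assume zd: "z \<in> down_hat ?Y ?hle (p, x)"
        then have zY: "z \<in> ?Y" and le: "leP r p" "leX p (f r p y) x" and ne: "(r, y) \<noteq> (p, x)"
          by (auto simp: down_hat_def less_in_def hocolim_le_def z)
        have rP: "r \<in> P" "y \<in> X r" using zY by (auto simp: z hocolim_set_def)
        have "r \<noteq> p"
        proof
          assume rp: "r = p"
          then have yE: "y \<in> E" using zY by (auto simp: z)
          have "leX p y x" using le(2) fid[OF pP] rP rp by simp
          then have "y = x" using xmin yE by blast
          then show False using ne rp by simp
        qed
        then show "z \<in> ?A" using zY le rP by (auto simp: z down_hat_def less_in_def)
      next
        assume zA: "z \<in> ?A"
        then have "r \<in> P" "y \<in> X r" "leP r p" "r \<noteq> p" "leX p (f r p y) x"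
          by (auto simp: z hocolim_set_def down_hat_def less_in_def)
        then show "z \<in> down_hat ?Y ?hle (p, x)"
          by (auto simp: z hocolim_set_def down_hat_def less_in_def hocolim_le_def)
      qed
    qed
    have cA: "contractible_fs ?hle (down_hat ?Y ?hle (p, x))" unfolding dh by (rule Ax_contr[OF xX])
    have pxY: "(p, x) \<in> ?Y" using xX pP xE by (simp add: hocolim_set_def)
    have wp: "weak_point ?Y ?hle (p, x)" using cA pxY by (simp add: weak_point_def down_weak_point_def)
    have Yrem: "?Y - {(p, x)} = {z \<in> hocolim_set P X. fst z \<noteq> p \<or> snd z \<in> E - {x}}" by auto
    have lt: "card (E - {x}) < card E" using finE xE by (rule card_Diff1_less)
    have IH: "collapses ?hle {z \<in> hocolim_set P X. fst z \<noteq> p \<or> snd z \<in> E - {x}} ?H'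
       \<and> order_complex_space {z \<in> hocolim_set P X. fst z \<noteq> p \<or> snd z \<in> E - {x}} ?hle
          homotopy_equivalent_space order_complex_space ?H' ?hle"
      by (rule less.hyps[OF lt]) (use less.prems in blast)
    have c1: "collapses ?hle ?Y ?H'"
      by (rule collapses.step[OF wp]) (use IH Yrem in simp)
    have poY: "finite_poset ?Y ?hle" by (rule fp_subset[OF H_po]) blast
    have "order_complex_space ?Y ?hle homotopy_equivalent_space order_complex_space (?Y - {(p, x)}) ?hle"
      by (rule weak_point_heq[OF poY pxY cA])
    moreover have "order_complex_space (?Y - {(p, x)}) ?hle homotopy_equivalent_space order_complex_space ?H' ?hle"
      using IH Yrem by simp
    ultimately have h: "order_complex_space ?Y ?hle homotopy_equivalent_space order_complex_space ?H' ?hle"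
      by (rule homotopy_eqv_trans)
    show ?thesis using c1 h by blast
  qed
qed

end



theorem proposition2p8:
  fixes P :: "'p set" and leP :: "'p \<Rightarrow> 'p \<Rightarrow> bool"
    and X :: "'p \<Rightarrow> 'x set" and leX :: "'p \<Rightarrow> 'x \<Rightarrow> 'x \<Rightarrow> bool"
    and f :: "'p \<Rightarrow> 'p \<Rightarrow> 'x \<Rightarrow> 'x" and p q :: 'p
  assumes "finite_poset P leP"
    and "poset_diagram P leP X leX f"
    and "p \<in> P"
    and "is_max_of (down_hat P leP p) leP q"
    and "\<forall>x\<in>X p. contractible_fs (leX q) {y\<in>X q. leX p (f q p y) x}"
  shows "collapses (hocolim_le leP leX f) (hocolim_set P X) (hocolim_set (P - {p}) X)
       \<and> weak_equivalent (hocolim_set P X) (hocolim_le leP leX f)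
                         (hocolim_set (P - {p}) X) (hocolim_le leP leX f)"
proof -
  have eq: "{z \<in> hocolim_set P X. fst z \<noteq> p \<or> snd z \<in> X p} = hocolim_set P X"
    by (auto simp: hocolim_set_def)
  have "collapses (hocolim_le leP leX f) {z \<in> hocolim_set P X. fst z \<noteq> p \<or> snd z \<in> X p} (hocolim_set (P - {p}) X)
   \<and> order_complex_space {z \<in> hocolim_set P X. fst z \<noteq> p \<or> snd z \<in> X p} (hocolim_le leP leX f)
       homotopy_equivalent_space order_complex_space (hocolim_set (P - {p}) X) (hocolim_le leP leX f)"
    by (rule main_ind[OF assms subset_refl])
  then show ?thesis unfolding eq weak_equivalent_def .
qed

end
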